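(* Let $n_1,\dots,n_l\ge 2$ be integers, and let $a_1,\dots,a_l$ be the discrepancies of the chain $[n_1,\dots,n_l]$, i.e. the unique solution of $\sum_j a_jE_j\cdot E_i=2-n_i$ for a chain of smooth rational curves $E_1,\dots,E_l$ with $E_i^2=-n_i$, $E_i\cdot E_{i+1}=1$, $E_i\cdot E_j=0$ for $|i-j|\ge2$. Then $a_k+a_{k+1}<1$ for all $1\le k\le l-1$ (equivalently, the minimal resolution of a log terminal singularity of type $A_{q,q_1}$ with this resolution graph has no redundant point) if and only if $(n_1,\dots,n_l)$, up to reversing the order, is one of: $(2,\dots,2)$ with $\alpha\ge1$ entries; $(2,\dots,2,3)$ with $\alpha\ge1$ entries equal to $2$; $(2,2,3,2)$; $(2,3,2)$; $(2,4)$; $(n)$ with $n\ge3$.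
   Context: Here all discrepancies satisfy $0\le a_i<1$, so a point of the minimal resolution is redundant (i.e. the multiplicity of $N=\sum a_iE_i$ at it is at least $1$) exactly when it is $E_k\cap E_{k+1}$ with $a_k+a_{k+1}\ge1$. Notation $[n_1,\dots,n_l]$ stands for the Hirzebruch–Jung continued fraction $n_1-1/(n_2-1/(\cdots-1/n_l))=q/q_1$ describing the singularity of type $A_{q,q_1}$; $[n_1,\dots,n_l]$ and $[n_l,\dots,n_1]$ describe the same singularity. *)

theory Defs
  imports Complex_Main
begin

definition chain_int :: "int list \<Rightarrow> nat \<Rightarrow> nat \<Rightarrow> real" where
  "chain_int ns i j =
     (if i = j then - of_int (ns ! i)
      else if i + 1 = j \<or> j + 1 = i then 1 else 0)"

definition is_discrepancy :: "int list \<Rightarrow> (nat \<Rightarrow> real) \<Rightarrow> bool" where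
  "is_discrepancy ns a \<longleftrightarrow>
     (\<forall>i < length ns. (\<Sum>j < length ns. a j * chain_int ns j i) = 2 - of_int (ns ! i))"

definition no_redundant_list :: "int list \<Rightarrow> bool" where
  "no_redundant_list ns \<longleftrightarrow>
     (\<exists>\<alpha>\<ge>1. ns = replicate \<alpha> 2) \<or>
     (\<exists>\<alpha>\<ge>1. ns = replicate \<alpha> 2 @ [3]) \<or>
     ns = [2,2,3,2] \<or> ns = [2,3,2] \<or> ns = [2,4] \<or>
     (\<exists>n\<ge>3. ns = [n])"

end

theory Submission
  imports Defs
begin


definition sol :: "nat \<Rightarrow> (nat \<Rightarrow> real) \<Rightarrow> (nat \<Rightarrow> real) \<Rightarrow> bool" where
  "sol l N X \<longleftrightarrow> X 0 = 1 \<and> X (Suc l) = 1 \<and>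
     (\<forall>m. 1 \<le> m \<and> m \<le> l \<longrightarrow> N m * X m = X (m - 1) + X (Suc m))"

lemma maxp:
  fixes y c :: "nat \<Rightarrow> real"
  assumes c2: "\<And>m. i \<le> m \<Longrightarrow> m \<le> k \<Longrightarrow> 2 \<le> c m"
  and ineq: "\<And>m. i \<le> m \<Longrightarrow> m \<le> k \<Longrightarrow>
     c m * y m \<le> (if i < m then y (m - 1) else 0) + (if m < k then y (Suc m) else 0)"
  and im: "i \<le> m" and mk: "m \<le> k"
  shows "y m \<le> 0"
proof (rule ccontr)
  assume neg: "\<not> y m \<le> 0"
  define S where "S = {i..k}"
  define Mx where "Mx = Max (y ` S)"
  have finS: "finite S" and neS: "S \<noteq> {}" using im mk by (auto simp: S_def)
  have le: "\<And>j. j \<in> S \<Longrightarrow> y j \<le> Mx" using finS by (simp add: Mx_def)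
  have mS: "m \<in> S" using im mk by (simp add: S_def)
  have Mpos: "Mx > 0" using le[OF mS] neg by linarith
  have "Mx \<in> y ` S" using finS neS by (simp add: Mx_def)
  then obtain j0 where j0: "j0 \<in> S" "y j0 = Mx" by auto
  define T where "T = {j \<in> S. y j = Mx}"
  have finT: "finite T" using finS by (simp add: T_def)
  have neT: "T \<noteq> {}" using j0 by (auto simp: T_def)
  define M where "M = Min T"
  have MT: "M \<in> T" using finT neT by (simp add: M_def)
  have Mmin: "\<And>j. j \<in> T \<Longrightarrow> M \<le> j" using finT by (simp add: M_def)
  have MS: "i \<le> M" "M \<le> k" and yM: "y M = Mx" using MT by (auto simp: T_def S_def)
  have L: "(if i < M then y (M - 1) else 0) < Mx"
  proof (cases "i < M")
    case True
    have "M - 1 \<in> S" using True MS by (auto simp: S_def)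
    moreover have "M - 1 \<notin> T" using Mmin[of "M - 1"] True by auto
    ultimately have "y (M - 1) \<noteq> Mx" by (auto simp: T_def)
    moreover have "y (M - 1) \<le> Mx" using le \<open>M - 1 \<in> S\<close> by auto
    ultimately show ?thesis using True by auto
  next
    case False then show ?thesis using Mpos by auto
  qed
  have R: "(if M < k then y (Suc M) else 0) \<le> Mx"
    using le Mpos MS by (auto simp: S_def)
  have "c M * y M \<ge> 2 * Mx" using c2[OF MS] yM Mpos by (simp add: mult_right_mono)
  with ineq[OF MS] L R show False by linarith
qed

lemma uniq:
  assumes s1: "sol l N X" and s2: "sol l N' X'" and NN: "\<And>m. 1 \<le> m \<Longrightarrow> m \<le> l \<Longrightarrow> N m = N' m"
  and N2: "\<And>m. 1 \<le> m \<Longrightarrow> m \<le> l \<Longrightarrow> 2 \<le> N m"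
  and m: "1 \<le> m" "m \<le> l"
  shows "X m = X' m"
proof -
  have e: "\<And>j. 1 \<le> j \<Longrightarrow> j \<le> l \<Longrightarrow> N j * (X j - X' j) = (X (j-1) - X' (j-1)) + (X (Suc j) - X' (Suc j))"
    using s1 s2 NN unfolding sol_def by (metis right_diff_distrib add_diff_add)
  have b0: "X 0 - X' 0 = 0" "X (Suc l) - X' (Suc l) = 0" using s1 s2 by (auto simp: sol_def)
  have bnd: "\<And>j f. 1 \<le> j \<Longrightarrow> j \<le> l \<Longrightarrow> f 0 = (0::real) \<Longrightarrow> f (Suc l) = 0 \<Longrightarrow>
      f (j-1) + f (Suc j) = (if 1 < j then f (j - 1) else 0) + (if j < l then f (Suc j) else 0)"
    by (auto simp: not_less le_antisym)
  have "X m - X' m \<le> 0"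
    apply (rule maxp[where c=N and i=1 and k=l, OF N2 _ m])
    apply assumption+
    using e bnd[where f="\<lambda>j. X j - X' j"] b0 by (metis order_refl)
  moreover have "X' m - X m \<le> 0"
    apply (rule maxp[where c=N and i=1 and k=l, OF N2 _ m])
    apply assumption+
    using e bnd[where f="\<lambda>j. X' j - X j"] b0 
    by (smt (verit, del_insts) mult_minus_right)
  ultimately show ?thesis by linarith
qed

lemma le1:
  assumes s: "sol l N X" and N2: "\<And>m. 1 \<le> m \<Longrightarrow> m \<le> l \<Longrightarrow> 2 \<le> N m"
  and m: "m \<le> Suc l"
  shows "X m \<le> 1"
proof (cases "1 \<le> m \<and> m \<le> l")
  case True
  have "X m - 1 \<le> 0"
  proof (rule maxp[where c=N and i=1 and k=l, OF N2 _ True[THEN conjunct1] True[THEN conjunct2]])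
    fix j assume j: "1 \<le> j" "j \<le> l"
    have e: "N j * X j = X (j-1) + X (Suc j)" using s j by (simp add: sol_def)
    have "N j * (X j - 1) = (X (j-1) - 1) + (X (Suc j) - 1) + (2 - N j)" using e by (simp add: algebra_simps)
    also have "\<dots> \<le> (X (j-1) - 1) + (X (Suc j) - 1)" using N2[OF j] by simp
    also have "\<dots> = (if 1 < j then X (j - 1) - 1 else 0) + (if j < l then X (Suc j) - 1 else 0)"
      using s j by (auto simp: sol_def not_less le_antisym)
    finally show "N j * (X j - 1) \<le> (if 1 < j then X (j - 1) - 1 else 0) + (if j < l then X (Suc j) - 1 else 0)" .
  qed
  then show ?thesis by simp
next
  case False
  then have "m = 0 \<or> m = Suc l" using m by auto
  then show ?thesis using s by (auto simp: sol_def)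
qed

lemma twoheavy:
  assumes s: "sol l N X" and N2: "\<And>m. 1 \<le> m \<Longrightarrow> m \<le> l \<Longrightarrow> 2 \<le> N m"
  and ik: "1 \<le> i" "i < k" "k \<le> l" and Ni: "3 \<le> N i" and Nk: "3 \<le> N k"
  shows "X i + X (Suc i) \<le> 1"
proof -
  have main: "\<And>m. i \<le> m \<Longrightarrow> m \<le> k \<Longrightarrow> X m - 1/2 \<le> 0"
  proof (rule maxp[where c=N and i=i and k=k])
    fix j assume j: "i \<le> j" "j \<le> k"
    then have j1: "1 \<le> j" "j \<le> l" using ik by auto
    then show "2 \<le> N j" by (rule N2)
    have e: "N j * X j = X (j-1) + X (Suc j)" using s j1 by (simp add: sol_def)
    have a: "X (j - 1) \<le> 1" by (rule le1[OF s N2]) (use j1 in auto)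
    have b: "X (Suc j) \<le> 1" by (rule le1[OF s N2]) (use j1 in auto)
    have eq: "N j * (X j - 1/2) = (X (j-1) - 1/2) + (X (Suc j) - 1/2) + (1 - N j / 2)" using e by (simp add: algebra_simps)
    show "N j * (X j - 1/2) \<le> (if i < j then X (j - 1) - 1/2 else 0) + (if j < k then X (Suc j) - 1/2 else 0)"
    proof (cases "i < j")
      case True
      show ?thesis
      proof (cases "j < k")
        case True
        then show ?thesis using eq \<open>i < j\<close> N2[OF j1] by simp
      next
        case False
        then have "j = k" using j by simp
        then show ?thesis using eq \<open>i < j\<close> Nk b by simp
      qed
    next
      case False
      then have "j = i" using j by simp
      then have "j < k" using ik by simp
      then show ?thesis using eq \<open>j = i\<close> Ni a by simp
    qed
  qed
  have "X i - 1/2 \<le> 0" by (rule main) (use ik in auto)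
  moreover have "X (Suc i) - 1/2 \<le> 0" by (rule main) (use ik in auto)
  ultimately show ?thesis by simp
qed

lemma heavy:
  fixes p q :: nat and w :: real
  assumes w: "w \<ge> 1"
  defines "A \<equiv> real p + 1" and "B \<equiv> real q + 1"
  defines "D \<equiv> A + B + w*A*B"
  defines "x \<equiv> (A+B)/D"
  defines "s \<equiv> w*B/D" and "t \<equiv> w*A/D"
  defines "Y \<equiv> \<lambda>m. if m \<le> Suc p then 1 - real m * s else 1 - (real (p+q+2) - real m) * t"
  defines "N \<equiv> \<lambda>m. if m = Suc p then w + 2 else (2::real)"
  shows "sol (p+q+1) N Y"
    and "(\<forall>m. 1 \<le> m \<longrightarrow> Suc m \<le> p+q+1 \<longrightarrow> Y m + Y (Suc m) > 1) \<longleftrightarrow>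
         ((p \<ge> 1 \<longrightarrow> real p*w*(real q+1) < real p+real q+2) \<and> (q \<ge> 1 \<longrightarrow> real q*w*(real p+1) < real p+real q+2))"
proof -
  have Apos: "A > 0" "B > 0" by (auto simp: A_def B_def)
  have Dpos: "D > 0" using Apos w unfolding D_def by (simp add: add_pos_pos)
  have As: "1 - A * s = x" using Dpos unfolding x_def s_def D_def by (simp add: field_simps)
  have Bt: "1 - B * t = x" using Dpos unfolding x_def t_def D_def by (simp add: field_simps)
  have wx: "w * x = s + t" using Dpos unfolding x_def s_def t_def by (simp add: field_simps)
  have s0: "s \<ge> 0" "t \<ge> 0" using Dpos Apos w unfolding s_def t_def by auto
  have Yr: "\<And>m. Suc p \<le> m \<Longrightarrow> Y m = 1 - (real (p+q+2) - real m) * t"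
  proof -
    fix m assume "Suc p \<le> m"
    show "Y m = 1 - (real (p+q+2) - real m) * t"
    proof (cases "m = Suc p")
      case True
      then show ?thesis using As Bt unfolding Y_def by (simp add: A_def B_def algebra_simps)
    next
      case False then show ?thesis using \<open>Suc p \<le> m\<close> unfolding Y_def by simp
    qed
  qed
  have Yl: "\<And>m. m \<le> Suc p \<Longrightarrow> Y m = 1 - real m * s" unfolding Y_def by simp
  show "sol (p+q+1) N Y"
    unfolding sol_def
  proof (intro conjI allI impI)
    show "Y 0 = 1" by (simp add: Yl)
    show "Y (Suc (p+q+1)) = 1" by (subst Yr) auto
    fix m assume m: "1 \<le> m \<and> m \<le> p+q+1"
    consider "m < Suc p" | "m = Suc p" | "m > Suc p" by linarith
    then show "N m * Y m = Y (m - 1) + Y (Suc m)"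
    proof cases
      case 1
      then show ?thesis using m by (simp add: Yl N_def of_nat_diff algebra_simps)
    next
      case 2
      have "Y (m - 1) = x + s" using 2 As by (simp add: Yl A_def algebra_simps)
      moreover have "Y (Suc m) = x + t" using 2 Bt by (simp add: Yr B_def algebra_simps)
      moreover have "Y m = x" using 2 As by (simp add: Yl A_def algebra_simps)
      ultimately show ?thesis using 2 wx by (simp add: N_def algebra_simps)
    next
      case 3
      then show ?thesis using m by (simp add: Yr N_def of_nat_diff algebra_simps)
    qed
  qed
  have L: "2*x + s > 1 \<longleftrightarrow> real p*w*(real q+1) < real p+real q+2"
  proof -
    have "2*x + s - 1 = (2*(A+B) + w*B - D) / D"
      using Dpos unfolding x_def s_def by (simp add: field_simps)
    also have "2*(A+B) + w*B - D = real p+real q+2 - real p*w*(real q+1)"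
      unfolding D_def A_def B_def by (simp add: algebra_simps)
    finally have "2*x + s - 1 = (real p+real q+2 - real p*w*(real q+1)) / D" .
    then show ?thesis using Dpos by (smt (verit) divide_pos_pos divide_nonpos_pos)
  qed
  have R: "2*x + t > 1 \<longleftrightarrow> real q*w*(real p+1) < real p+real q+2"
  proof -
    have "2*x + t - 1 = (2*(A+B) + w*A - D) / D"
      using Dpos unfolding x_def t_def by (simp add: field_simps)
    also have "2*(A+B) + w*A - D = real p+real q+2 - real q*w*(real p+1)"
      unfolding D_def A_def B_def by (simp add: algebra_simps)
    finally have "2*x + t - 1 = (real p+real q+2 - real q*w*(real p+1)) / D" .
    then show ?thesis using Dpos by (smt (verit) divide_pos_pos divide_nonpos_pos)
  qed
  have pairL: "\<And>m. Suc m \<le> Suc p \<Longrightarrow> Y m + Y (Suc m) = 2 - (2 * real m + 1) * s"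
    by (simp add: Yl algebra_simps)
  have pairR: "\<And>m. Suc p \<le> m \<Longrightarrow> Y m + Y (Suc m) = 2 - (2 * (real (p+q+2) - real m) - 1) * t"
    by (simp add: Yr algebra_simps)
  have atL: "1 \<le> p \<Longrightarrow> Y p + Y (Suc p) = 2*x + s"
    using pairL[of p] As by (simp add: A_def algebra_simps)
  have atR: "Y (Suc p) + Y (Suc (Suc p)) = 2*x + t"
    using pairR[of "Suc p"] Bt by (simp add: B_def algebra_simps)
  show "(\<forall>m. 1 \<le> m \<longrightarrow> Suc m \<le> p+q+1 \<longrightarrow> Y m + Y (Suc m) > 1) \<longleftrightarrow>
         ((p \<ge> 1 \<longrightarrow> real p*w*(real q+1) < real p+real q+2) \<and> (q \<ge> 1 \<longrightarrow> real q*w*(real p+1) < real p+real q+2))"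
  proof
    assume H: "\<forall>m. 1 \<le> m \<longrightarrow> Suc m \<le> p+q+1 \<longrightarrow> Y m + Y (Suc m) > 1"
    show "(p \<ge> 1 \<longrightarrow> real p*w*(real q+1) < real p+real q+2) \<and> (q \<ge> 1 \<longrightarrow> real q*w*(real p+1) < real p+real q+2)"
    proof (intro conjI impI)
      assume "1 \<le> p" then show "real p*w*(real q+1) < real p+real q+2" using H[rule_format, of p] atL L by simp
    next
      assume "1 \<le> q" then show "real q*w*(real p+1) < real p+real q+2" using H[rule_format, of "Suc p"] atR R by simp
    qed
  next
    assume H: "(p \<ge> 1 \<longrightarrow> real p*w*(real q+1) < real p+real q+2) \<and> (q \<ge> 1 \<longrightarrow> real q*w*(real p+1) < real p+real q+2)"
    show "\<forall>m. 1 \<le> m \<longrightarrow> Suc m \<le> p+q+1 \<longrightarrow> Y m + Y (Suc m) > 1"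
    proof (intro allI impI)
      fix m assume m1: "1 \<le> m" and m2: "Suc m \<le> p+q+1"
      show "Y m + Y (Suc m) > 1"
      proof (cases "Suc m \<le> Suc p")
        case True
        then have p1: "1 \<le> p" using m1 by simp
        have "(2 * real m + 1) * s \<le> (2 * real p + 1) * s" using True s0 by (intro mult_right_mono) auto
        then show ?thesis using pairL[OF True] atL[OF p1] pairL[of p] L H p1 by simp
      next
        case False
        then have mp: "Suc p \<le> m" by simp
        have q1: "1 \<le> q" using m2 mp by simp
        have "(2 * (real (p+q+2) - real m) - 1) * t \<le> (2 * (real (p+q+2) - real (Suc p)) - 1) * t"
          using mp s0 by (intro mult_right_mono) auto
        then show ?thesis using pairR[OF mp] atR pairR[of "Suc p"] R H q1 by simp
      qed
    qed
  qed
qed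



lemma intcond:
  fixes p q w :: nat
  assumes w: "w \<ge> 1"
  shows "((p \<ge> 1 \<longrightarrow> p*w*(q+1) < p+q+2) \<and> (q \<ge> 1 \<longrightarrow> q*w*(p+1) < p+q+2)) \<longleftrightarrow>
    ((p \<ge> 1 \<and> q = 0 \<and> w = 1) \<or> (q \<ge> 1 \<and> p = 0 \<and> w = 1) \<or> (p = 2 \<and> q = 1 \<and> w = 1) \<or> (p = 1 \<and> q = 2 \<and> w = 1)
     \<or> (p = 1 \<and> q = 1 \<and> w = 1) \<or> (p = 1 \<and> q = 0 \<and> w = 2) \<or> (p = 0 \<and> q = 1 \<and> w = 2) \<or> (p = 0 \<and> q = 0))"
    (is "?L \<longleftrightarrow> ?R")
proof
  assume ?R then show ?L by auto
next
  assume L: ?L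
  consider "w = 1" | "w = 2" | "w \<ge> 3" using w by linarith
  then show ?R
  proof cases
    case 1
    then have a: "p \<ge> 1 \<longrightarrow> p*q < q + 2" and b: "q \<ge> 1 \<longrightarrow> q*p < p+2" using L by (auto simp: algebra_simps)
    show ?thesis
    proof (cases "p = 0 \<or> q = 0")
      case True then show ?thesis using 1 by auto
    next
      case False
      then have p1: "p \<ge> 1" "q \<ge> 1" by auto
      have "p \<le> 2"
      proof (rule ccontr)
        assume "\<not> p \<le> 2"
        then have "3*q \<le> p*q" by simp
        moreover have "p*q < q + 2" using a p1 by simp
        ultimately show False using p1 by linarith
      qed
      moreover have "q \<le> 2"
      proof (rule ccontr)
        assume "\<not> q \<le> 2"
        then have "3*p \<le> q*p" by simp
        moreover have "q*p < p + 2" using b p1 by simp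
        ultimately show False using p1 by linarith
      qed
      ultimately have "p \<in> {1,2}" "q \<in> {1,2}" using p1 by auto
      then show ?thesis using a b 1 by auto
    qed
  next
    case 2
    then have a: "p \<ge> 1 \<longrightarrow> 2*p*q + p < q + 2" and b: "q \<ge> 1 \<longrightarrow> 2*q*p + q < p+2" using L by (auto simp: algebra_simps)
    show ?thesis
    proof (cases "p = 0 \<or> q = 0")
      case True then show ?thesis using 2 a b by auto
    next
      case False
      then have pq: "p*q \<ge> 1" "p \<ge> 1" "q \<ge> 1" by auto
      have "2*p*q + p < q + 2" using a pq by blast
      moreover have "2*q*p + q < p + 2" using b pq by blast
      moreover have "2*p*q = 2*(p*q)" "2*q*p = 2*(p*q)" by (simp_all add: ac_simps)
      ultimately have False using pq by linarith
      then show ?thesis ..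
    qed
  next
    case 3
    have h1: "p*3 \<le> p*w" "q*3 \<le> q*w" using 3 by simp_all
    have m1: "p*3*(q+1) \<le> p*w*(q+1)" "q*3*(p+1) \<le> q*w*(p+1)"
      by (rule mult_le_mono1[OF h1(1)], rule mult_le_mono1[OF h1(2)])
    have a: "p \<ge> 1 \<longrightarrow> p*3*(q+1) < p+q+2"
      using L m1(1) by linarith
    have b: "q \<ge> 1 \<longrightarrow> q*3*(p+1) < p+q+2"
      using L m1(2) by linarith
    show ?thesis
    proof (cases "p = 0 \<or> q = 0")
      case True
      have "p = 0 \<and> q = 0"
      proof (rule ccontr)
        assume "\<not> (p = 0 \<and> q = 0)"
        then consider "p = 0" "q \<ge> 1" | "q = 0" "p \<ge> 1" using True by auto
        then show False
        proof cases
          case 1 then have "q*3*(p+1) < p+q+2" using b by blast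
          then show False using 1 by simp
        next
          case 2 then have "p*3*(q+1) < p+q+2" using a by blast
          then show False using 2 by simp
        qed
      qed
      then show ?thesis by simp
    next
      case False
      then have pq: "p*q \<ge> 1" "p \<ge> 1" "q \<ge> 1" by auto
      have "p*3*(q+1) < p+q+2" using a pq by blast
      moreover have "q*3*(p+1) < p+q+2" using b pq by blast
      moreover have "p*3*(q+1) = 3*(p*q) + 3*p" "q*3*(p+1) = 3*(p*q) + 3*q" by (simp_all add: algebra_simps)
      ultimately have False using pq by linarith
      then show ?thesis ..
    qed
  qed
qed



lemma decomp_eq:
  fixes n n' :: int
  assumes "n \<noteq> 2" "n' \<noteq> 2"
  shows "replicate p 2 @ [n] @ replicate q 2 = replicate p' 2 @ [n'] @ replicate q' 2 \<longleftrightarrow> p = p' \<and> n = n' \<and> q = q'"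
  using assms
proof (induction p arbitrary: p')
  case 0
  then show ?case by (cases p') auto
next
  case (Suc p)
  then show ?case by (cases p') auto
qed

lemma nrl_decomp:
  fixes n :: int
  assumes n: "n \<ge> 3"
  shows "no_redundant_list (replicate p 2 @ [n] @ replicate q 2) \<longleftrightarrow>
    (p \<ge> 1 \<and> q = 0 \<and> n = 3) \<or> (p = 2 \<and> q = 1 \<and> n = 3) \<or> (p = 1 \<and> q = 1 \<and> n = 3) \<or> (p = 1 \<and> q = 0 \<and> n = 4) \<or> (p = 0 \<and> q = 0)"
proof -
  have n2: "n \<noteq> 2" using n by simp
  have r: "\<And>\<alpha>. replicate \<alpha> 2 \<noteq> replicate p 2 @ [n] @ replicate q 2"
  proof
    fix \<alpha> assume "replicate \<alpha> (2::int) = replicate p 2 @ [n] @ replicate q 2"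
    then have "n \<in> set (replicate \<alpha> (2::int))" by simp
    then show False using n2 by (simp split: if_splits)
  qed
  have e1: "\<And>\<alpha>. replicate \<alpha> 2 @ [3] = replicate \<alpha> 2 @ [3::int] @ replicate 0 2" by simp
  have e2: "[2,2,3,2] = replicate 2 2 @ [3::int] @ replicate 1 2" by (simp add: numeral_2_eq_2)
  have e3: "[2,3,2] = replicate 1 2 @ [3::int] @ replicate 1 2" by simp
  have e4: "[2,4] = replicate 1 2 @ [4::int] @ replicate 0 2" by simp
  have e5: "\<And>m. [m] = replicate 0 2 @ [m::int] @ replicate 0 2" by simp
  let ?L = "replicate p 2 @ [n] @ replicate q (2::int)"
  have d1: "(\<exists>\<alpha>\<ge>1. ?L = replicate \<alpha> 2) \<longleftrightarrow> False" using r by metis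
  have d2: "(\<exists>\<alpha>\<ge>1. ?L = replicate \<alpha> 2 @ [3]) \<longleftrightarrow> (p \<ge> 1 \<and> q = 0 \<and> n = 3)"
    proof -
    have eq: "\<And>\<alpha>. ?L = replicate \<alpha> 2 @ [3] @ replicate 0 2 \<longleftrightarrow> p = \<alpha> \<and> n = 3 \<and> q = 0"
      by (subst decomp_eq) (use n2 in auto)
    show ?thesis unfolding e1 eq by auto
  qed
  have d3: "?L = [2,2,3,2] \<longleftrightarrow> (p = 2 \<and> q = 1 \<and> n = 3)"
    unfolding e2 by (subst decomp_eq) (use n2 in auto)
  have d4: "?L = [2,3,2] \<longleftrightarrow> (p = 1 \<and> q = 1 \<and> n = 3)"
    unfolding e3 by (subst decomp_eq) (use n2 in auto)
  have d5: "?L = [2,4] \<longleftrightarrow> (p = 1 \<and> q = 0 \<and> n = 4)"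
    unfolding e4 by (subst decomp_eq) (use n2 in auto)
  have d6: "(\<exists>m\<ge>3. ?L = [m]) \<longleftrightarrow> (p = 0 \<and> q = 0)"
  proof
    assume "\<exists>m\<ge>3. ?L = [m]"
    then obtain m where "m \<ge> 3" "?L = replicate 0 2 @ [m] @ replicate 0 2" by auto
    moreover have "?L = replicate 0 2 @ [m] @ replicate 0 2 \<longleftrightarrow> p = 0 \<and> n = m \<and> q = 0"
      by (rule decomp_eq) (use n2 \<open>m \<ge> 3\<close> in auto)
    ultimately show "p = 0 \<and> q = 0" by simp
  next
    assume "p = 0 \<and> q = 0" then show "\<exists>m\<ge>3. ?L = [m]" using n by auto
  qed
  show ?thesis unfolding no_redundant_list_def d1 d2 d3 d4 d5 d6 by simp
qed

lemma one_pos: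
  assumes "\<forall>j<length (ns::int list). j \<noteq> c \<longrightarrow> ns ! j = 2" "i < k" "k < length ns"
  shows "ns ! i = 2 \<or> ns ! k = 2"
proof (cases "i = c")
  case True
  then have "k \<noteq> c" using assms(2) by simp
  then show ?thesis using assms(1,3) by simp
next
  case False
  then show ?thesis using assms by simp
qed

lemma nrl_heavy:
  assumes "no_redundant_list ns" "i < k" "k < length ns"
  shows "ns ! i = 2 \<or> ns ! k = 2"
proof -
  have "\<exists>c. \<forall>j<length ns. j \<noteq> c \<longrightarrow> ns ! j = 2"
    using assms(1) unfolding no_redundant_list_def
  proof (elim disjE exE conjE)
    fix \<alpha> assume "ns = replicate \<alpha> 2" then show ?thesis by simp
  next
    fix \<alpha> assume "ns = replicate \<alpha> 2 @ [3]" then show ?thesis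
      by (intro exI[of _ \<alpha>]) (auto simp: nth_append)
  next
    assume "ns = [2,2,3,2]" then show ?thesis
      by (intro exI[of _ 2]) (auto simp: less_Suc_eq eval_nat_numeral nth_Cons')
  next
    assume "ns = [2,3,2]" then show ?thesis
      by (intro exI[of _ 1]) (auto simp: less_Suc_eq eval_nat_numeral nth_Cons')
  next
    assume "ns = [2,4]" then show ?thesis
      by (intro exI[of _ 1]) (auto simp: less_Suc_eq eval_nat_numeral nth_Cons')
  next
    fix n assume "ns = [n]" then show ?thesis by (intro exI[of _ 0]) auto
  qed
  then show ?thesis using one_pos assms(2,3) by blast
qed


lemma sum_chain:
  assumes i: "i < length ns"
  shows "(\<Sum>j<length ns. a j * chain_int ns j i) =
    - of_int (ns!i) * a i + (if 0 < i then a (i-1) else 0) + (if Suc i < length ns then a (Suc i) else 0)"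
proof -
  have "\<And>j. a j * chain_int ns j i = (if j = i then - of_int (ns!i) * a i else 0)
     + (if j = i - 1 \<and> 0 < i then a j else 0) + (if j = Suc i then a j else 0)"
    by (auto simp: chain_int_def)
  then have "(\<Sum>j<length ns. a j * chain_int ns j i) = (\<Sum>j<length ns. (if j = i then - of_int (ns!i) * a i else 0)
     + (if j = i - 1 \<and> 0 < i then a j else 0) + (if j = Suc i then a j else 0))" by simp
  also have "\<dots> = (\<Sum>j<length ns. (if j = i then - of_int (ns!i) * a i else 0))
     + (\<Sum>j<length ns. (if j = i - 1 \<and> 0 < i then a j else 0)) + (\<Sum>j<length ns. (if j = Suc i then a j else 0))"
    by (simp add: sum.distrib)
  also have "\<dots> = - of_int (ns!i) * a i + (if 0 < i then a (i-1) else 0) + (if Suc i < length ns then a (Suc i) else 0)"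
  proof -
    have "(\<Sum>j<length ns. (if j = i - 1 \<and> 0 < i then a j else 0)) = (if 0 < i then a (i-1) else 0)"
    proof (cases "0 < i")
      case True then show ?thesis using i by (simp add: sum.delta) linarith
    next
      case False then show ?thesis by simp
    qed
    moreover have "(\<Sum>j<length ns. (if j = Suc i then a j else 0)) = (if Suc i < length ns then a (Suc i) else 0)"
      by (simp add: sum.delta)
    ultimately show ?thesis using i by (simp add: sum.delta)
  qed
  finally show ?thesis .
qed

theorem proposition4p3:
  fixes ns :: "int list" and a :: "nat \<Rightarrow> real"
  assumes "ns \<noteq> []"
    and "\<forall>i < length ns. ns ! i \<ge> 2"
    and "is_discrepancy ns a"
  shows "(\<forall>k. k + 1 < length ns \<longrightarrow> a k + a (k + 1) < 1) \<longleftrightarrow>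
         (no_redundant_list ns \<or> no_redundant_list (rev ns))"
proof -
  note ne = assms(1) and ge2 = assms(2) and disc = assms(3)
  define l where "l = length ns"
  have l1: "l \<ge> 1" using ne by (simp add: l_def Suc_le_eq)
  define X where "X = (\<lambda>m. if 1 \<le> m \<and> m \<le> l then 1 - a (m - 1) else 1)"
  define N where "N = (\<lambda>m. real_of_int (ns ! (m - 1)))"
  have N2: "\<And>m. 1 \<le> m \<Longrightarrow> m \<le> l \<Longrightarrow> 2 \<le> N m"
    using ge2 by (auto simp: N_def l_def)
  have sl: "sol l N X"
    unfolding sol_def
  proof (intro conjI allI impI)
    show "X 0 = 1" by (simp add: X_def)
    show "X (Suc l) = 1" by (simp add: X_def)
    fix m assume m: "1 \<le> m \<and> m \<le> l"
    define i where "i = m - 1"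
    have i: "i < length ns" "m = Suc i" using m by (auto simp: i_def l_def)
    have e: "- of_int (ns!i) * a i + (if 0 < i then a (i-1) else 0) + (if Suc i < length ns then a (Suc i) else 0)
        = 2 - of_int (ns ! i)"
      using disc i(1) sum_chain[OF i(1), of a] unfolding is_discrepancy_def by simp
    have x1: "X (m - 1) = 1 - (if 0 < i then a (i-1) else 0)" using i by (auto simp: X_def l_def)
    have x2: "X (Suc m) = 1 - (if Suc i < length ns then a (Suc i) else 0)" using i by (auto simp: X_def l_def)
    have x0: "X m = 1 - a i" using i m by (simp add: X_def)
    show "N m * X m = X (m - 1) + X (Suc m)"
      unfolding x0 x1 x2 using e i by (simp add: N_def algebra_simps)
  qed
  define CX where "CX = (\<forall>m. 1 \<le> m \<longrightarrow> Suc m \<le> l \<longrightarrow> X m + X (Suc m) > 1)"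
  have LC: "(\<forall>k. k + 1 < length ns \<longrightarrow> a k + a (k + 1) < 1) \<longleftrightarrow> CX"
  proof
    assume H: "\<forall>k. k + 1 < length ns \<longrightarrow> a k + a (k + 1) < 1"
    show CX unfolding CX_def
    proof (intro allI impI)
      fix m assume "1 \<le> m" "Suc m \<le> l"
      then obtain k where k: "m = Suc k" "k + 1 < length ns" by (cases m) (auto simp: l_def)
      then show "X m + X (Suc m) > 1" using H[rule_format, OF k(2)] by (simp add: X_def l_def)
    qed
  next
    assume H: CX
    show "\<forall>k. k + 1 < length ns \<longrightarrow> a k + a (k + 1) < 1"
    proof (intro allI impI)
      fix k assume k: "k + 1 < length ns"
      have "X (Suc k) + X (Suc (Suc k)) > 1" using H k unfolding CX_def l_def by auto
      then show "a k + a (k + 1) < 1" using k by (simp add: X_def l_def)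
    qed
  qed
  show ?thesis unfolding LC
  proof (cases "\<exists>i k. i < k \<and> k < l \<and> ns ! i \<noteq> 2 \<and> ns ! k \<noteq> 2")
    case True
    then obtain i k where ik: "i < k" "k < l" "ns ! i \<noteq> 2" "ns ! k \<noteq> 2" by blast
    have gi: "2 \<le> ns ! i" "2 \<le> ns ! k" using ik ge2 by (auto simp: l_def)
    have Ni: "3 \<le> N (Suc i)" using ik gi by (simp add: N_def)
    have Nk: "3 \<le> N (Suc k)" using ik gi by (simp add: N_def)
    have "X (Suc i) + X (Suc (Suc i)) \<le> 1"
      by (rule twoheavy[OF sl N2 _ _ _ Ni Nk]) (use ik in auto)
    moreover have "1 \<le> Suc i" "Suc (Suc i) \<le> l" using ik by auto
    ultimately have nC: "\<not> CX" unfolding CX_def by force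
    have n1: "\<not> no_redundant_list ns" using nrl_heavy[of ns i k] ik by (auto simp: l_def)
    have r1: "rev ns ! (l - 1 - k) = ns ! k" using ik by (simp add: rev_nth l_def Suc_diff_Suc)
    have r2: "rev ns ! (l - 1 - i) = ns ! i" using ik by (simp add: rev_nth l_def Suc_diff_Suc)
    have n2: "\<not> no_redundant_list (rev ns)"
    proof
      assume nr: "no_redundant_list (rev ns)"
      have "l - 1 - k < l - 1 - i" "l - 1 - i < length (rev ns)" using ik by (auto simp: l_def)
      then show False using nrl_heavy[OF nr] ik r1 r2 by metis
    qed
    show "CX \<longleftrightarrow> no_redundant_list ns \<or> no_redundant_list (rev ns)" using nC n1 n2 by simp
  next
    case False
    then have nh: "\<And>i k. i < k \<Longrightarrow> k < l \<Longrightarrow> ns ! i = 2 \<or> ns ! k = 2" by blast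
    show "CX \<longleftrightarrow> no_redundant_list ns \<or> no_redundant_list (rev ns)"
    proof (cases "\<forall>i<l. ns ! i = 2")
      case True
      then have nsr: "ns = replicate l 2" by (intro nth_equalityI) (auto simp: l_def)
      have "no_redundant_list ns" unfolding no_redundant_list_def using nsr l1 by blast
      moreover have "sol l (\<lambda>_. 2) (\<lambda>_. 1)" by (simp add: sol_def)
      moreover have "\<And>m. 1 \<le> m \<Longrightarrow> m \<le> l \<Longrightarrow> N m = 2" using True by (auto simp: N_def)
      ultimately have "\<And>m. 1 \<le> m \<Longrightarrow> m \<le> l \<Longrightarrow> X m = 1"
        using uniq[OF sl _ _ N2] by metis
      then have CX unfolding CX_def by auto
      then show ?thesis using \<open>no_redundant_list ns\<close> by simp
    next
      case False
      then obtain p where p: "p < l" "ns ! p \<noteq> 2" by blast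
      define q where "q = l - 1 - p"
      define n where "n = ns ! p"
      have n3: "n \<ge> 3" using p ge2 by (force simp: n_def l_def)
      define w where "w = nat (n - 2)"
      have w1: "w \<ge> 1" and nw: "n = int w + 2" using n3 by (auto simp: w_def)
      have lpq: "l = p + q + 1" using p by (simp add: q_def)
      have nsd: "ns = replicate p 2 @ [n] @ replicate q 2"
      proof (rule nth_equalityI)
        show "length ns = length (replicate p 2 @ [n] @ replicate q 2)" using lpq by (simp add: l_def)
        fix j assume j: "j < length ns"
        consider "j < p" | "j = p" | "p < j" by linarith
        then show "ns ! j = (replicate p 2 @ [n] @ replicate q 2) ! j"
        proof cases
          case 1 then show ?thesis using nh[of j p] p j by (auto simp: nth_append l_def)
        next
          case 2 then show ?thesis by (simp add: nth_append n_def)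
        next
          case 3 then show ?thesis using nh[of p j] p j by (auto simp: nth_append l_def nth_Cons' q_def)
        qed
      qed
      have w3: "int w + 2 = 3 \<longleftrightarrow> w = 1" and w4: "int w + 2 = 4 \<longleftrightarrow> w = 2" by auto
      have nsrev: "rev ns = replicate q 2 @ [n] @ replicate p 2" using nsd by simp
      define Y where "Y = (\<lambda>m. if m \<le> Suc p then 1 - real m * (real w*(real q + 1)/((real p + 1) + (real q + 1) + real w*(real p + 1)*(real q + 1)))
          else 1 - (real (p+q+2) - real m) * (real w*(real p + 1)/((real p + 1) + (real q + 1) + real w*(real p + 1)*(real q + 1))))"
      define N' where "N' = (\<lambda>m. if m = Suc p then real w + 2 else (2::real))"
      have hv1: "sol (p+q+1) N' Y" and hv2: "(\<forall>m. 1 \<le> m \<longrightarrow> Suc m \<le> p+q+1 \<longrightarrow> Y m + Y (Suc m) > 1) \<longleftrightarrow>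
         ((p \<ge> 1 \<longrightarrow> real p*real w*(real q+1) < real p+real q+2) \<and> (q \<ge> 1 \<longrightarrow> real q*real w*(real p+1) < real p+real q+2))"
        unfolding Y_def N'_def by (rule heavy(1), use w1 in simp, rule heavy(2), use w1 in simp)
      have NN: "\<And>m. 1 \<le> m \<Longrightarrow> m \<le> l \<Longrightarrow> N m = N' m"
      proof -
        fix m assume m: "1 \<le> m" "m \<le> l"
        have "ns ! (m - 1) = (if m = Suc p then n else 2)"
        proof -
          consider "m - 1 < p" | "m - 1 = p" | "m - 1 > p" by linarith
          then show ?thesis
          proof cases
            case 1 then show ?thesis using m by (subst nsd) (auto simp: nth_append)
          next
            case 2 then show ?thesis using m by (subst nsd) (auto simp: nth_append)
          next
            case 3
            then have "m - 1 - p - 1 < q" using m lpq by auto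
            then show ?thesis using m 3 by (subst nsd) (auto simp: nth_append nth_Cons')
          qed
        qed
        then show "N m = N' m" using nw by (simp add: N_def N'_def)
      qed
      have XY: "\<And>m. 1 \<le> m \<Longrightarrow> m \<le> l \<Longrightarrow> X m = Y m"
        using uniq[OF sl _ NN N2] hv1 lpq by simp
      have "CX \<longleftrightarrow> (\<forall>m. 1 \<le> m \<longrightarrow> Suc m \<le> p+q+1 \<longrightarrow> Y m + Y (Suc m) > 1)"
        unfolding CX_def lpq[symmetric] using XY by (metis Suc_leD le_trans le_SucI)
      also have "\<dots> \<longleftrightarrow> ((p \<ge> 1 \<longrightarrow> p*w*(q+1) < p+q+2) \<and> (q \<ge> 1 \<longrightarrow> q*w*(p+1) < p+q+2))"
      proof -
        have c1: "real (p*w*(q+1)) = real p*real w*(real q+1)" "real (q*w*(p+1)) = real q*real w*(real p+1)"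
          "real (p+q+2) = real p+real q+2" by (simp_all add: algebra_simps)
        have "(real p*real w*(real q+1) < real p+real q+2) \<longleftrightarrow> p*w*(q+1) < p+q+2"
          unfolding c1[symmetric] by (rule of_nat_less_iff)
        moreover have "(real q*real w*(real p+1) < real p+real q+2) \<longleftrightarrow> q*w*(p+1) < p+q+2"
          unfolding c1[symmetric] by (rule of_nat_less_iff)
        ultimately show ?thesis using hv2 by simp
      qed
      also have "\<dots> \<longleftrightarrow> no_redundant_list ns \<or> no_redundant_list (rev ns)"
        unfolding intcond[OF w1] nsrev
        apply (subst nsd)
        unfolding nrl_decomp[OF n3] unfolding nw w3 w4 by (smt (verit))
      finally show ?thesis .
    qed
  qed
qed

end
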